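(* Let $M$ be a finite set of alternatives, $\mathcal{R}$ the set of weak preference orders on $M$, and $\varphi:\mathcal{R}\to\Delta(M)$ a mechanism. If $\varphi$ is strategyproof, then it is separation responsive.
   Context: A preference order is a complete, transitive relation $R$ on $M$; $a\,I\,b$ means $a\,R\,b$ and $b\,R\,a$; $a\,P\,b$ means $a\,R\,b$ and not $b\,R\,a$. Write $R$ as $M_1\,P\,\cdots\,P\,M_K$ where $(M_k)$ are the nonempty indifference classes ordered so that $a\,P\,b$ for $a\in M_k$, $b\in M_{k'}$, $k<k'$. For $A\subseteq M$, $\varphi_A(R)=\sum_{a\in A}(\varphi(R))_a$. A lottery $x$ first order-stochastically dominates $y$ at $R$ if $\sum_{j: j R a}x_j\ge\sum_{j: j R a}y_j$ for all $a\in M$. $\varphi$ is strategyproof if $\varphi(R)$ first order-stochastically dominates $\varphi(R')$ at $R$ for all $R,R'\in\mathcal{R}$. A separation is a pair $(R,R')$ such that, with $R=M_1\,P\,\cdots\,P\,M_K$, there are $\kappa\in\{1,\dots,K\}$ and a partition of $M_\kappa$ into disjoint nonempty $M_\kappa^1,M_\kappa^2$ with $R'=M_1\,P'\,\cdots\,P'\,M_{\kappa-1}\,P'\,M_\kappa^1\,P'\,M_\kappa^2\,P'\,M_{\kappa+1}\,P'\,\cdots\,P'\,M_K$ (indifference within each listed set). $\varphi$ is separation responsive if for every separation $(R,R')$, $\varphi_{M_\kappa^1}(R')\ge\varphi_{M_\kappa^1}(R)$ and $\varphi_{M_\kappa^2}(R')\le\varphi_{M_\kappa^2}(R)$. *)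

theory Defs
  imports Complex_Main
begin

text \<open>Weak preference orders on the finite set of alternatives M: complete, transitive
relations on M (as sets of pairs (a,b) meaning a R b).\<close>
definition pref_orders :: "'a set \<Rightarrow> 'a rel set" where
  "pref_orders M = {R. R \<subseteq> M \<times> M \<and> (\<forall>a\<in>M. \<forall>b\<in>M. (a,b) \<in> R \<or> (b,a) \<in> R) \<and> trans R}"

definition lottery :: "'a set \<Rightarrow> ('a \<Rightarrow> real) \<Rightarrow> bool" where
  "lottery M x \<longleftrightarrow> (\<forall>a\<in>M. x a \<ge> 0) \<and> (\<Sum>a\<in>M. x a) = 1"

definition prob_set :: "('a \<Rightarrow> real) \<Rightarrow> 'a set \<Rightarrow> real" where
  "prob_set x A = (\<Sum>a\<in>A. x a)"

definition sd_dominates :: "'a set \<Rightarrow> 'a rel \<Rightarrow> ('a \<Rightarrow> real) \<Rightarrow> ('a \<Rightarrow> real) \<Rightarrow> bool" where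
  "sd_dominates M R x y \<longleftrightarrow>
     (\<forall>a\<in>M. (\<Sum>j\<in>{j\<in>M. (j,a) \<in> R}. x j) \<ge> (\<Sum>j\<in>{j\<in>M. (j,a) \<in> R}. y j))"

definition strategyproof :: "'a set \<Rightarrow> ('a rel \<Rightarrow> 'a \<Rightarrow> real) \<Rightarrow> bool" where
  "strategyproof M \<phi> \<longleftrightarrow>
     (\<forall>R\<in>pref_orders M. \<forall>R'\<in>pref_orders M. sd_dominates M R (\<phi> R) (\<phi> R'))"

definition ind_class :: "'a set \<Rightarrow> 'a rel \<Rightarrow> 'a \<Rightarrow> 'a set" where
  "ind_class M R a = {b\<in>M. (a,b) \<in> R \<and> (b,a) \<in> R}"

text \<open>A separation (R,R') with separated class C = C1 \<union> C2: R' agrees with R except that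
every element of C1 is now strictly preferred to every element of C2; this is exactly
R' = M_1 P' ... P' M_kappa^1 P' M_kappa^2 P' ... P' M_K.\<close>
definition separation_with :: "'a set \<Rightarrow> 'a rel \<Rightarrow> 'a rel \<Rightarrow> 'a set \<Rightarrow> 'a set \<Rightarrow> bool" where
  "separation_with M R R' C1 C2 \<longleftrightarrow>
     R \<in> pref_orders M \<and>
     (\<exists>a\<in>M. ind_class M R a = C1 \<union> C2) \<and>
     C1 \<noteq> {} \<and> C2 \<noteq> {} \<and> C1 \<inter> C2 = {} \<and>
     R' = R - C2 \<times> C1"

definition separation_responsive :: "'a set \<Rightarrow> ('a rel \<Rightarrow> 'a \<Rightarrow> real) \<Rightarrow> bool" where
  "separation_responsive M \<phi> \<longleftrightarrow>
     (\<forall>R R' C1 C2. separation_with M R R' C1 C2 \<longrightarrow>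
        prob_set (\<phi> R') C1 \<ge> prob_set (\<phi> R) C1 \<and>
        prob_set (\<phi> R') C2 \<le> prob_set (\<phi> R) C2)"

end

theory Submission
  imports Defs
begin

lemma sep_pref:
  assumes "separation_with M R R' C1 C2"
  shows "R' \<in> pref_orders M"
proof -
  from assms have R: "R \<in> pref_orders M" and R': "R' = R - C2 \<times> C1"
    and d: "C1 \<inter> C2 = {}" unfolding separation_with_def by auto
  from assms obtain a where a: "a \<in> M" "ind_class M R a = C1 \<union> C2"
    unfolding separation_with_def by auto
  have tr: "trans R" and sub: "R \<subseteq> M \<times> M" and tot: "\<forall>x\<in>M. \<forall>y\<in>M. (x,y) \<in> R \<or> (y,x) \<in> R"
    using R unfolding pref_orders_def by auto
  have cls: "\<And>x. x \<in> C1 \<union> C2 \<Longrightarrow> x \<in> M \<and> (a,x) \<in> R \<and> (x,a) \<in> R"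
    using a(2) unfolding ind_class_def by blast
  have "R' \<subseteq> M \<times> M" using sub R' by auto
  moreover have "\<forall>x\<in>M. \<forall>y\<in>M. (x,y) \<in> R' \<or> (y,x) \<in> R'"
  proof (intro ballI)
    fix x y assume "x \<in> M" "y \<in> M"
    show "(x,y) \<in> R' \<or> (y,x) \<in> R'"
    proof (cases "x \<in> C1 \<union> C2 \<and> y \<in> C1 \<union> C2")
      case True
      then have "(x,y) \<in> R" "(y,x) \<in> R" using cls tr by (meson transD)+
      then show ?thesis using R' d by auto
    next
      case False
      then show ?thesis using tot \<open>x \<in> M\<close> \<open>y \<in> M\<close> R' by auto
    qed
  qed
  moreover have "trans R'"
  proof (rule transI)
    fix x y z assume xy: "(x,y) \<in> R'" and yz: "(y,z) \<in> R'"
    then have "(x,y) \<in> R" "(y,z) \<in> R" using R' by auto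
    then have xz: "(x,z) \<in> R" using tr by (meson transD)
    show "(x,z) \<in> R'"
    proof (rule ccontr)
      assume "(x,z) \<notin> R'"
      then have "x \<in> C2" "z \<in> C1" using xz R' by auto
      then have "(z,a) \<in> R" "(a,x) \<in> R" "(x,a) \<in> R" "(a,z) \<in> R" using cls by auto
      then have "(y,a) \<in> R" "(a,y) \<in> R" using \<open>(x,y) \<in> R\<close> \<open>(y,z) \<in> R\<close> tr by (meson transD)+
      moreover have "y \<in> M" using \<open>(x,y) \<in> R\<close> sub by auto
      ultimately have "y \<in> C1 \<union> C2" using a(2) unfolding ind_class_def by auto
      then show False using xy yz R' \<open>x \<in> C2\<close> \<open>z \<in> C1\<close> by auto
    qed
  qed
  ultimately show ?thesis unfolding pref_orders_def by auto
qed

theorem lemma3: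
  fixes M :: "'a set" and \<phi> :: "'a rel \<Rightarrow> 'a \<Rightarrow> real"
  assumes "finite M"
    and "\<forall>R\<in>pref_orders M. lottery M (\<phi> R)"
    and "strategyproof M \<phi>"
  shows "separation_responsive M \<phi>"
  unfolding separation_responsive_def
proof (intro allI impI)
  fix R R' C1 C2 assume sep: "separation_with M R R' C1 C2"
  have R'p: "R' \<in> pref_orders M" using sep_pref[OF sep] .
  from sep have R: "R \<in> pref_orders M" and R': "R' = R - C2 \<times> C1"
    and d: "C1 \<inter> C2 = {}" and ne: "C1 \<noteq> {}" "C2 \<noteq> {}" unfolding separation_with_def by auto
  from sep obtain a where a: "a \<in> M" "ind_class M R a = C1 \<union> C2"
    unfolding separation_with_def by auto
  have tr: "trans R" and sub: "R \<subseteq> M \<times> M" and tot: "\<forall>x\<in>M. \<forall>y\<in>M. (x,y) \<in> R \<or> (y,x) \<in> R"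
    using R unfolding pref_orders_def by auto
  have cls: "\<And>x. x \<in> C1 \<union> C2 \<longleftrightarrow> x \<in> M \<and> (a,x) \<in> R \<and> (x,a) \<in> R"
    using a(2) unfolding ind_class_def by blast
  have sdRR': "sd_dominates M R (\<phi> R) (\<phi> R')" and sdR'R: "sd_dominates M R' (\<phi> R') (\<phi> R)"
    using assms(3) R R'p unfolding strategyproof_def by auto
  define up where "up = (\<lambda>(Q::'a rel) b. {j\<in>M. (j,b) \<in> Q})"
  have dom: "\<And>Q x y b. sd_dominates M Q x y \<Longrightarrow> b \<in> M \<Longrightarrow> sum x (up Q b) \<ge> sum y (up Q b)"
    unfolding sd_dominates_def up_def by auto
  define U where "U = up R a"
  obtain c1 where c1: "c1 \<in> C1" using ne by auto
  obtain c2 where c2: "c2 \<in> C2" using ne by auto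
  have c1M: "c1 \<in> M" "(a,c1) \<in> R" "(c1,a) \<in> R" using cls c1 by auto
  have c2M: "c2 \<in> M" "(a,c2) \<in> R" "(c2,a) \<in> R" using cls c2 by auto
  have upRc2: "up R c2 = U" unfolding U_def up_def using c2M tr by (meson transD)
  have upR'c2: "up R' c2 = U" using upRc2 R' c2 d unfolding up_def by auto
  have upR'c1: "up R' c1 = U - C2"
  proof -
    have "up R c1 = U" unfolding U_def up_def using c1M tr by (meson transD)
    then show ?thesis using R' c1 unfolding up_def by auto
  qed
  have finU: "finite U" unfolding U_def up_def using assms(1) by auto
  have C2U: "C2 \<subseteq> U" "C1 \<subseteq> U" unfolding U_def up_def using cls by auto
  define V where "V = U - (C1 \<union> C2)"
  have finV: "finite V" using finU V_def by auto
  have eqV: "sum (\<phi> R) V = sum (\<phi> R') V"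
  proof (cases "V = {}")
    case True then show ?thesis by simp
  next
    case False
    define f where "f = (\<lambda>b. card (up R b))"
    obtain b where b: "b \<in> V" "\<forall>j\<in>V. f j \<le> f b"
    proof -
      have "Max (f ` V) \<in> f ` V" using finV False by auto
      then obtain b where "b \<in> V" "f b = Max (f ` V)" by auto
      moreover have "\<forall>j\<in>V. f j \<le> Max (f ` V)" using finV by auto
      ultimately show ?thesis using that by auto
    qed
    have bM: "b \<in> M" and ba: "(b,a) \<in> R" and nab: "(a,b) \<notin> R"
      using b(1) cls unfolding V_def U_def up_def by auto
    have "up R b = V"
    proof
      show "up R b \<subseteq> V"
      proof
        fix j assume "j \<in> up R b"
        then have j: "j \<in> M" "(j,b) \<in> R" unfolding up_def by auto
        then have "(j,a) \<in> R" using ba tr by (meson transD)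
        moreover have "(a,j) \<notin> R" using j nab tr by (meson transD)
        ultimately show "j \<in> V" using j cls unfolding V_def U_def up_def by auto
      qed
    next
      show "V \<subseteq> up R b"
      proof
        fix j assume jV: "j \<in> V"
        then have jM: "j \<in> M" unfolding V_def U_def up_def by auto
        show "j \<in> up R b"
        proof (rule ccontr)
          assume "j \<notin> up R b"
          then have nj: "(j,b) \<notin> R" using jM unfolding up_def by auto
          then have bj: "(b,j) \<in> R" using tot jM bM by auto
          have "up R b \<subseteq> up R j" unfolding up_def using bj tr by (auto dest: transD)
          moreover have "j \<in> up R j - up R b" unfolding up_def using jM nj bj tr sub
            by (metis (no_types, lifting) DiffI mem_Collect_eq tot)
          moreover have "finite (up R j)" unfolding up_def using assms(1) by auto
          ultimately have "card (up R b) < card (up R j)"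
            by (metis Diff_iff psubsetI psubset_card_mono)
          then show False using b jV unfolding f_def by force
        qed
      qed
    qed
    moreover have "up R' b = up R b" unfolding up_def R' using b(1) cls V_def by auto
    ultimately show ?thesis using dom[OF sdRR' bM] dom[OF sdR'R bM] by auto
  qed
  have eqU: "sum (\<phi> R) U = sum (\<phi> R') U"
    using dom[OF sdRR' c2M(1)] dom[OF sdR'R c2M(1)] upRc2 upR'c2 by auto
  have geU2: "sum (\<phi> R') (U - C2) \<ge> sum (\<phi> R) (U - C2)"
    using dom[OF sdR'R c1M(1)] upR'c1 by auto
  have split1: "\<And>x. sum x U = sum x (U - C2) + sum x C2"
    using finU C2U by (metis add.commute sum.subset_diff)
  have "U - C2 = V \<union> C1" "V \<inter> C1 = {}" using V_def C2U d by auto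
  then have split2: "\<And>x. sum x (U - C2) = sum x V + sum x C1"
    using finV finU C2U by (metis finite_subset sum.union_disjoint)
  show "prob_set (\<phi> R) C1 \<le> prob_set (\<phi> R') C1 \<and> prob_set (\<phi> R') C2 \<le> prob_set (\<phi> R) C2"
    unfolding prob_set_def using eqV eqU geU2 split1 split2
    by (smt (verit) split1 split2)
qed

end
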